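(* The category $\mathbb S^{\mathrm{m},\mathbb P}_r$ is $\mathbf{Ord}$-enriched, i.e. its sequential composition $;$ is monotone in both arguments with respect to the orders on hom-sets. Moreover, the sum $\oplus$ and the trace operator $\mathrm{tr}$ are monotone.
   Context: Notation: $[k]=\{1,\dots,k\}$; $T(X)=X+\mathbb R\times X+\{\exists^*,\forall^*\}$; diagrammatic composition. $\mathbb S^{\mathrm{m},\mathbb P}_r$ has natural numbers as objects; an arrow $f:m\to n$ is a function $f:[m]\to T([n])$ such that for all $i\ne j$ in $[m]$, $f(i)\notin[n]$ or $f(j)\notin\{f(i)\}\cup\mathbb R\times\{f(i)\}$. On $T([n])$ let $\le$ be the least order with $(r_1,i)\le(r_2,i)$ whenever $r_1\ge r_2$ and $i\in[n]$, $\exists^*\le z$ and $z\le\forall^*$ for all $z\in T([n])$; hom-sets are ordered pointwise ($f\le g$ iff $f(i)\le g(i)$ for all $i$). Operations: $(f;g)(i)=f(i)$ if $f(i)\in\{\exists^*,\forall^*\}$; $g(j)$ if $f(i)=j\in[l]$; $g(j)$ if $f(i)=(r,j)$ and $g(j)\in\{\exists^*,\forall^*\}$; $(r,k)$ if $f(i)=(r,j)$, $g(j)=k$; $(r+r',k)$ if $f(i)=(r,j)$, $g(j)=(r',k)$. $(f\oplus g)(i)=f(i)$ ($i\le m$), $(f\oplus g)(m+i)$ is $g(i)$ with its index $j$ (if any) shifted to $n+j$ (for $f:m\to n$). Trace of $f:l+m\to l+n$ at $i\in[m]$: $v_0=l+i$; if $j=0$ or $v_j\in[l]$ then $v_{j+1}=f(v_j)$;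 if $v_j=(r,k)$, $k\in[l]$, then $v_{j+1}=f(k)$; otherwise stop at $v_j$. If finite $(v_0,..,v_K)$ and $S$ is the sum of first components of $v_j\in\mathbb R\times[l+n]$, $1\le j\le K$: value $v_K$ if $v_K\in\{\exists^*,\forall^*\}$; $k$ if $v_K=l+k$ and $v_j\in[l]$ for $1\le j<K$; $(S,k)$ if $v_K=l+k$ and some earlier $v_j\in\mathbb R\times[l]$; $(S,k)$ if $v_K=(r,l+k)$. If infinite, with $w'_1,w'_2,..$ the first components of the (infinitely many) entries in $\mathbb R\times[l]$: $\exists^*$ if $\liminf_N\frac1N\sum_{t\le N}w'_t\ge0$, else $\forall^*$. *)

theory Defs
  imports "HOL-Analysis.Analysis"
begin

text \<open>Elements of T([n]) = [n] + R x [n] + {Ex*, All*}; indices are natural numbers,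
  membership in [n] = {1..n} is imposed by the predicate inT.\<close>
datatype tval = Var nat | Wt real nat | ExS | AllS

definition inT :: "nat \<Rightarrow> tval \<Rightarrow> bool" where
  "inT n v = (case v of Var k \<Rightarrow> k \<in> {1..n} | Wt r k \<Rightarrow> k \<in> {1..n} | _ \<Rightarrow> True)"

text \<open>Arrows m -> n: functions on [m] (values outside [m] are irrelevant) into T([n])
  satisfying the linearity side condition.\<close>
definition arrow :: "nat \<Rightarrow> nat \<Rightarrow> (nat \<Rightarrow> tval) \<Rightarrow> bool" where
  "arrow m n f \<longleftrightarrow>
     (\<forall>i\<in>{1..m}. inT n (f i)) \<and>
     (\<forall>i\<in>{1..m}. \<forall>j\<in>{1..m}. i \<noteq> j \<longrightarrow>
        (\<forall>k. f i = Var k \<longrightarrow> f j \<noteq> Var k \<and> (\<forall>r. f j \<noteq> Wt r k)))"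

definition tle :: "tval \<Rightarrow> tval \<Rightarrow> bool" where
  "tle x y \<longleftrightarrow> x = y \<or> x = ExS \<or> y = AllS \<or>
     (\<exists>r1 r2 i. x = Wt r1 i \<and> y = Wt r2 i \<and> r1 \<ge> r2)"

definition hle :: "nat \<Rightarrow> (nat \<Rightarrow> tval) \<Rightarrow> (nat \<Rightarrow> tval) \<Rightarrow> bool" where
  "hle m f g \<longleftrightarrow> (\<forall>i\<in>{1..m}. tle (f i) (g i))"

definition seqc :: "(nat \<Rightarrow> tval) \<Rightarrow> (nat \<Rightarrow> tval) \<Rightarrow> (nat \<Rightarrow> tval)" where
  "seqc f g = (\<lambda>i. case f i of
       ExS \<Rightarrow> ExS
     | AllS \<Rightarrow> AllS
     | Var j \<Rightarrow> g j
     | Wt r j \<Rightarrow> (case g j of ExS \<Rightarrow> ExS | AllS \<Rightarrow> AllS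
                   | Var k \<Rightarrow> Wt r k | Wt r' k \<Rightarrow> Wt (r + r') k))"

definition shiftT :: "nat \<Rightarrow> tval \<Rightarrow> tval" where
  "shiftT n v = (case v of Var j \<Rightarrow> Var (n + j) | Wt r j \<Rightarrow> Wt r (n + j) | x \<Rightarrow> x)"

definition osum :: "nat \<Rightarrow> nat \<Rightarrow> (nat \<Rightarrow> tval) \<Rightarrow> (nat \<Rightarrow> tval) \<Rightarrow> (nat \<Rightarrow> tval)" where
  "osum m n f g = (\<lambda>i. if i \<le> m then f i else shiftT n (g (i - m)))"

definition contL :: "nat \<Rightarrow> tval \<Rightarrow> bool" where
  "contL l v = (case v of Var k \<Rightarrow> k \<in> {1..l} | Wt r k \<Rightarrow> k \<in> {1..l} | _ \<Rightarrow> False)"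

definition idxT :: "tval \<Rightarrow> nat" where
  "idxT v = (case v of Var k \<Rightarrow> k | Wt r k \<Rightarrow> k | _ \<Rightarrow> 0)"

definition wtT :: "tval \<Rightarrow> real" where
  "wtT v = (case v of Wt r k \<Rightarrow> r | _ \<Rightarrow> 0)"

definition isVar :: "tval \<Rightarrow> bool" where
  "isVar v = (case v of Var k \<Rightarrow> True | _ \<Rightarrow> False)"

definition isWt :: "tval \<Rightarrow> bool" where
  "isWt v = (case v of Wt r k \<Rightarrow> True | _ \<Rightarrow> False)"

text \<open>The trace sequence v_0, v_1, ... for f : l+m -> l+n at i in [m];
  v_0 = l+i is encoded as Var (l+i); once the sequence stops it stays constant.\<close>
primrec tseq :: "nat \<Rightarrow> (nat \<Rightarrow> tval) \<Rightarrow> nat \<Rightarrow> nat \<Rightarrow> tval" where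
  "tseq l f i 0 = Var (l + i)"
| "tseq l f i (Suc j) =
     (if j = 0 then f (l + i)
      else if contL l (tseq l f i j) then f (idxT (tseq l f i j))
      else tseq l f i j)"

definition trace_at :: "nat \<Rightarrow> (nat \<Rightarrow> tval) \<Rightarrow> nat \<Rightarrow> tval" where
  "trace_at l f i =
    (let v = tseq l f i in
     if \<exists>j\<ge>1. \<not> contL l (v j) then
       (let K = (LEAST j. j \<ge> 1 \<and> \<not> contL l (v j));
            S = (\<Sum>j\<in>{1..K}. wtT (v j)) in
        case v K of
          ExS \<Rightarrow> ExS
        | AllS \<Rightarrow> AllS
        | Var k \<Rightarrow> (if \<forall>j\<in>{1..<K}. isVar (v j) then Var (k - l) else Wt S (k - l))
        | Wt r k \<Rightarrow> Wt S (k - l))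
     else
       (let w' = (\<lambda>t. wtT (v (enumerate {j. j \<ge> 1 \<and> isWt (v j)} t))) in
        if Liminf sequentially (\<lambda>N. ereal ((\<Sum>t<N. w' t) / real N)) \<ge> 0
        then ExS else AllS))"

definition trace_op :: "nat \<Rightarrow> (nat \<Rightarrow> tval) \<Rightarrow> (nat \<Rightarrow> tval)" where
  "trace_op l f = (\<lambda>i. trace_at l f i)"

end

theory Submission
  imports Defs
begin

definition simT :: "tval \<Rightarrow> tval \<Rightarrow> bool" where
  "simT x y \<longleftrightarrow> x = y \<or> (\<exists>r1 r2 k. x = Wt r1 k \<and> y = Wt r2 k \<and> r1 \<ge> r2)"

lemma simT_props:
  assumes "simT x y"
  shows "contL l x = contL l y \<and> isVar x = isVar y \<and> isWt x = isWt y \<and> idxT x = idxT y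
         \<and> wtT x \<ge> wtT y"
  using assms by (auto simp: simT_def contL_def isVar_def isWt_def idxT_def wtT_def)

lemma simT_tle: "simT x y \<Longrightarrow> tle x y"
  by (auto simp: simT_def tle_def)

lemma tle_cases: "tle x y \<Longrightarrow> simT x y \<or> x = ExS \<or> y = AllS"
  by (auto simp: simT_def tle_def)

lemma contL_idx: "contL l x \<Longrightarrow> idxT x \<in> {1..l}"
  by (cases x) (auto simp: contL_def idxT_def)

lemma tseq_stop:
  assumes "j \<ge> 1" "\<not> contL l (tseq l f i j)"
  shows "tseq l f i (j + d) = tseq l f i j"
  using assms by (induction d) auto

lemma tseq_step:
  assumes h: "hle (l+m) f g" and i: "i \<in> {1..m}"
    and s: "simT (tseq l f i j) (tseq l g i j)"
  shows "tle (tseq l f i (Suc j)) (tseq l g i (Suc j))"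
proof (cases "j = 0")
  case True
  then show ?thesis using h i by (auto simp: hle_def)
next
  case False
  note p = simT_props[OF s, of l]
  show ?thesis
  proof (cases "contL l (tseq l f i j)")
    case True
    have "idxT (tseq l f i j) \<in> {1..l+m}" using contL_idx[OF True] by auto
    then show ?thesis using True False p h by (auto simp: hle_def)
  next
    case c: False
    then show ?thesis using False p s simT_tle by auto
  qed
qed

lemma trace_mono:
  assumes h: "hle (l+m) f g" and i: "i \<in> {1..m}"
  shows "tle (trace_at l f i) (trace_at l g i)"
proof -
  define v where "v = tseq l f i"
  define u where "u = tseq l g i"
  have st: "\<And>j. simT (v j) (u j) \<Longrightarrow> tle (v (Suc j)) (u (Suc j))"
    using tseq_step[OF h i] unfolding v_def u_def by blast
  show ?thesis
  proof (cases "\<forall>j. simT (v j) (u j)")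
    case True
    note p = simT_props[OF True[rule_format]]
    have ce: "\<And>j. contL l (v j) = contL l (u j)" using p by blast
    show ?thesis
    proof (cases "\<exists>j\<ge>1. \<not> contL l (v j)")
      case P: True
      define K where "K = (LEAST j. j \<ge> 1 \<and> \<not> contL l (v j))"
      have K2: "K = (LEAST j. j \<ge> 1 \<and> \<not> contL l (u j))" unfolding K_def using ce by simp
      have Pu: "\<exists>j\<ge>1. \<not> contL l (u j)" using P ce by blast
      define S where "S = (\<Sum>j\<in>{1..K}. wtT (v j))"
      define S' where "S' = (\<Sum>j\<in>{1..K}. wtT (u j))"
      have SS: "S \<ge> S'" unfolding S_def S'_def by (rule sum_mono) (use p in blast)
      have ef: "trace_at l f i = (case v K of ExS \<Rightarrow> ExS | AllS \<Rightarrow> AllS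
          | Var k \<Rightarrow> (if \<forall>j\<in>{1..<K}. isVar (v j) then Var (k - l) else Wt S (k - l))
          | Wt r k \<Rightarrow> Wt S (k - l))"
        unfolding trace_at_def Let_def v_def[symmetric] K_def[symmetric] S_def[symmetric]
        by (subst if_P[OF P]) (rule refl)
      have eg: "trace_at l g i = (case u K of ExS \<Rightarrow> ExS | AllS \<Rightarrow> AllS
          | Var k \<Rightarrow> (if \<forall>j\<in>{1..<K}. isVar (u j) then Var (k - l) else Wt S' (k - l))
          | Wt r k \<Rightarrow> Wt S' (k - l))"
        unfolding trace_at_def Let_def u_def[symmetric] K2[symmetric] S'_def[symmetric]
        by (subst if_P[OF Pu]) (rule refl)
      have ve: "\<And>j. isVar (v j) = isVar (u j)" using p by blast
      have sK: "simT (v K) (u K)" using True by blast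
      have vu: "(\<forall>j\<in>{1..<K}. isVar (v j)) = (\<forall>j\<in>{1..<K}. isVar (u j))" using ve by simp
      show ?thesis using sK unfolding simT_def
      proof (elim disjE exE conjE)
        assume "v K = u K"
        then show ?thesis unfolding ef eg vu using SS by (cases "u K") (auto simp: tle_def)
      next
        fix r1 r2 k assume "v K = Wt r1 k" "u K = Wt r2 k" "r2 \<le> r1"
        then show ?thesis unfolding ef eg vu using SS by (auto simp: tle_def)
      qed
    next
      case P: False
      have Pu: "\<not> (\<exists>j\<ge>1. \<not> contL l (u j))" using P ce by blast
      have we: "{j. j \<ge> 1 \<and> isWt (v j)} = {j. j \<ge> 1 \<and> isWt (u j)}" using p by blast
      define E where "E = {j. j \<ge> 1 \<and> isWt (v j)}"
      define w where "w = (\<lambda>t. wtT (v (enumerate E t)))"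
      define w' where "w' = (\<lambda>t. wtT (u (enumerate E t)))"
      have ww: "\<And>t. w t \<ge> w' t" unfolding w_def w'_def using p by blast
      have ef: "trace_at l f i = (if Liminf sequentially (\<lambda>N. ereal ((\<Sum>t<N. w t) / real N)) \<ge> 0
        then ExS else AllS)"
        unfolding trace_at_def Let_def v_def[symmetric] E_def[symmetric] w_def[symmetric]
        by (subst if_not_P[OF P]) (rule refl)
      have eg: "trace_at l g i = (if Liminf sequentially (\<lambda>N. ereal ((\<Sum>t<N. w' t) / real N)) \<ge> 0
        then ExS else AllS)"
        unfolding trace_at_def Let_def u_def[symmetric] we[symmetric] E_def[symmetric] w'_def[symmetric]
        by (subst if_not_P[OF Pu]) (rule refl)
      have "Liminf sequentially (\<lambda>N. ereal ((\<Sum>t<N. w' t) / real N))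
          \<le> Liminf sequentially (\<lambda>N. ereal ((\<Sum>t<N. w t) / real N))"
      proof (rule Liminf_mono, rule always_eventually, rule allI)
        fix N
        have "(\<Sum>t<N. w' t) \<le> (\<Sum>t<N. w t)" by (rule sum_mono) (use ww in blast)
        then show "ereal ((\<Sum>t<N. w' t) / real N) \<le> ereal ((\<Sum>t<N. w t) / real N)"
          by (simp add: divide_right_mono)
      qed
      then show ?thesis unfolding ef eg by (auto simp: tle_def)
    qed
  next
    case False
    define j0 where "j0 = (LEAST j. \<not> simT (v j) (u j))"
    have nj0: "\<not> simT (v j0) (u j0)" unfolding j0_def by (rule LeastI_ex) (use False in blast)
    have bel: "\<And>j. j < j0 \<Longrightarrow> simT (v j) (u j)" unfolding j0_def using not_less_Least by blast
    have "simT (v 0) (u 0)" by (simp add: v_def u_def simT_def)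
    then have j0pos: "j0 \<ge> 1" using nj0 by (cases j0) auto
    then obtain j1 where j1: "j0 = Suc j1" by (cases j0) auto
    have "tle (v j0) (u j0)" using st[OF bel[of j1]] j1 by simp
    then have ev: "v j0 = ExS \<or> u j0 = AllS" using nj0 tle_cases by blast
    have cl: "\<And>j. 1 \<le> j \<Longrightarrow> j < j0 \<Longrightarrow> contL l (v j) \<and> contL l (u j)"
    proof -
      fix j assume a: "1 \<le> j" "j < j0"
      show "contL l (v j) \<and> contL l (u j)"
      proof (rule ccontr)
        assume "\<not> (contL l (v j) \<and> contL l (u j))"
        then have nc: "\<not> contL l (v j)" "\<not> contL l (u j)" using simT_props[OF bel[OF a(2)], of l] by auto
        have "v (j + (j0 - j)) = v j" unfolding v_def by (rule tseq_stop) (use a nc in \<open>auto simp: v_def\<close>)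
        moreover have "u (j + (j0 - j)) = u j" unfolding u_def by (rule tseq_stop) (use a nc in \<open>auto simp: u_def\<close>)
        ultimately show False using a bel nj0 by auto
      qed
    qed
    show ?thesis
    proof (cases "v j0 = ExS")
      case True
      have ex: "\<exists>j\<ge>1. \<not> contL l (v j)" using True j0pos by (auto simp: contL_def intro!: exI[of _ j0])
      have K: "(LEAST j. j \<ge> 1 \<and> \<not> contL l (v j)) = j0"
      proof (rule Least_equality)
        show "1 \<le> j0 \<and> \<not> contL l (v j0)" using True j0pos by (simp add: contL_def)
      next
        fix y assume "1 \<le> y \<and> \<not> contL l (v y)"
        then show "j0 \<le> y" using cl by (meson not_less)
      qed
      have "trace_at l f i = ExS"
        unfolding trace_at_def Let_def using ex K True by (simp add: v_def)
      then show ?thesis by (simp add: tle_def)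
    next
      case False
      then have A: "u j0 = AllS" using ev by simp
      have ex: "\<exists>j\<ge>1. \<not> contL l (u j)" using A j0pos by (auto simp: contL_def intro!: exI[of _ j0])
      have K: "(LEAST j. j \<ge> 1 \<and> \<not> contL l (u j)) = j0"
      proof (rule Least_equality)
        show "1 \<le> j0 \<and> \<not> contL l (u j0)" using A j0pos by (simp add: contL_def)
      next
        fix y assume "1 \<le> y \<and> \<not> contL l (u y)"
        then show "j0 \<le> y" using cl by (meson not_less)
      qed
      have "trace_at l g i = AllS"
        unfolding trace_at_def Let_def using ex K A by (simp add: u_def)
      then show ?thesis by (simp add: tle_def)
    qed
  qed
qed

lemma seq_pt:
  assumes t: "tle x x'" and x: "\<And>j. x = Var j \<or> (\<exists>r. x = Wt r j) \<Longrightarrow> tle (g j) (g' j)"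
  shows "tle (case x of ExS \<Rightarrow> ExS | AllS \<Rightarrow> AllS | Var j \<Rightarrow> g j
     | Wt r j \<Rightarrow> (case g j of ExS \<Rightarrow> ExS | AllS \<Rightarrow> AllS
                   | Var k \<Rightarrow> Wt r k | Wt r' k \<Rightarrow> Wt (r + r') k))
    (case x' of ExS \<Rightarrow> ExS | AllS \<Rightarrow> AllS | Var j \<Rightarrow> g' j
     | Wt r j \<Rightarrow> (case g' j of ExS \<Rightarrow> ExS | AllS \<Rightarrow> AllS
                   | Var k \<Rightarrow> Wt r k | Wt r' k \<Rightarrow> Wt (r + r') k))"
  using tle_cases[OF t]
proof (elim disjE)
  assume "x = ExS" then show ?thesis by (simp add: tle_def)
next
  assume "x' = AllS" then show ?thesis by (simp add: tle_def)
next
  assume "simT x x'"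
  then show ?thesis unfolding simT_def
  proof (elim disjE exE conjE)
    assume e: "x = x'"
    show ?thesis
    proof (cases x)
      case (Var j)
      then show ?thesis using e x[of j] by simp
    next
      case (Wt r j)
      have gj: "tle (g j) (g' j)" using x[of j] Wt by simp
      show ?thesis using e Wt tle_cases[OF gj]
        by (cases "g j"; cases "g' j") (auto simp: tle_def simT_def)
    qed (use e in \<open>auto simp: tle_def\<close>)
  next
    fix r1 r2 k assume a: "x = Wt r1 k" "x' = Wt r2 k" "r2 \<le> r1"
    have gj: "tle (g k) (g' k)" using x[of k] a by simp
    show ?thesis using a tle_cases[OF gj]
      by (cases "g k"; cases "g' k") (auto simp: tle_def simT_def)
  qed
qed

lemma seq_mono:
  assumes "arrow m l f" "hle m f f'" "hle l g g'"
  shows "hle m (seqc f g) (seqc f' g')"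
  unfolding hle_def
proof
  fix i assume i: "i \<in> {1..m}"
  have t: "tle (f i) (f' i)" using assms(2) i by (simp add: hle_def)
  have it: "inT l (f i)" using assms(1) i by (simp add: arrow_def)
  have sh: "\<And>j. j \<in> {1..l} \<Longrightarrow> tle (g j) (g' j)" using assms(3) by (simp add: hle_def)
  have x: "\<And>j. f i = Var j \<or> (\<exists>r. f i = Wt r j) \<Longrightarrow> tle (g j) (g' j)"
    using it sh by (auto simp: inT_def)
  show "tle (seqc f g i) (seqc f' g' i)"
    unfolding seqc_def using seq_pt[OF t x] by simp
qed

theorem propositionD3:
  shows
   "(\<forall>m l n f f' g g'. arrow m l f \<and> arrow m l f' \<and> arrow l n g \<and> arrow l n g' \<and>
        hle m f f' \<and> hle l g g' \<longrightarrow> hle m (seqc f g) (seqc f' g'))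
    \<and> (\<forall>m n m' n' f f' g g'. arrow m n f \<and> arrow m n f' \<and> arrow m' n' g \<and> arrow m' n' g' \<and>
        hle m f f' \<and> hle m' g g' \<longrightarrow> hle (m + m') (osum m n f g) (osum m n f' g'))
    \<and> (\<forall>l m n f g. arrow (l + m) (l + n) f \<and> arrow (l + m) (l + n) g \<and>
        hle (l + m) f g \<longrightarrow> hle m (trace_op l f) (trace_op l g))"
proof (intro conjI allI impI)
  fix m l n f f' g g'
  assume "arrow m l f \<and> arrow m l f' \<and> arrow l n g \<and> arrow l n g' \<and> hle m f f' \<and> hle l g g'"
  then show "hle m (seqc f g) (seqc f' g')" using seq_mono by blast
next
  fix m n m' n' f f' g g'
  assume a: "arrow m n f \<and> arrow m n f' \<and> arrow m' n' g \<and> arrow m' n' g' \<and> hle m f f' \<and> hle m' g g'"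
  show "hle (m + m') (osum m n f g) (osum m n f' g')"
    unfolding hle_def
  proof
    fix i assume i: "i \<in> {1..m+m'}"
    show "tle (osum m n f g i) (osum m n f' g' i)"
    proof (cases "i \<le> m")
      case True
      then show ?thesis using a i by (simp add: osum_def hle_def)
    next
      case False
      then have "i - m \<in> {1..m'}" using i by auto
      then have t: "tle (g (i - m)) (g' (i - m))" using a by (simp add: hle_def)
      show ?thesis using False t
        by (auto simp: osum_def tle_def shiftT_def split: tval.splits)
    qed
  qed
next
  fix l m n f g
  assume "arrow (l + m) (l + n) f \<and> arrow (l + m) (l + n) g \<and> hle (l + m) f g"
  then show "hle m (trace_op l f) (trace_op l g)"
    using trace_mono by (auto simp: hle_def trace_op_def)
qed

end
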